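(* Fix $q\in[0,1]$, $p\in(0,1)\setminus\{1/2\}$, an integer $k\geq1$ and $f:[0,1]\to[0,1]$, and let $\{S_n\}$ be the elephant random walk with $k$ extractions with replacement described in the context. If either (E1) $1/2<p<1/2+1/(2k)$ and $f(1)<p/(2p-1)$, or (E2) $1/2-1/(2k)<p<1/2$ and $f(0)<(1-p)/(1-2p)$, then $S_n/n$ converges almost surely to some $x^*\in(-1,1)$.
   Context: The model: set $X_0=S_0=0$ and let $X_1\in\{\pm1\}$ with $P(X_1=1)=q$. Let $\mathcal{F}_n$ be the $\sigma$-field of all information of the process up to time $n$. For each $n\geq1$, draw $U_{n,1},\dots,U_{n,k}$ i.i.d. uniform on $\{1,\dots,n\}$ (independently of the past), set $C_n^+=\sum_{i=1}^k\chi\{X_{U_{n,i}}=1\}$, and, conditionally on $\mathcal{F}_n$ and the $U_{n,i}$, let $X_{n+1}=1$ with probability $pf(C_n^+/k)+(1-p)\{1-f(C_n^+/k)\}$ and $X_{n+1}=-1$ otherwise. Set $S_n=\sum_{i=1}^n X_i$. The sample size $k$ does not depend on $n$. *)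

theory Defs
  imports "HOL-Probability.Probability"
begin

text \<open>Elephant random walk with k extractions with replacement.
  X n : the steps (X 0 = 0, X n in {-1,1} for n >= 1);
  U n i : the i-th uniform draw (i in {1..k}) made at time n >= 1, in {1..n}.\<close>

text \<open>Everything is discrete-valued, so the
  sigma-field generated by a history is the family of all its preimages.\<close>
definition erw_hist ::
  "nat \<Rightarrow> (nat \<Rightarrow> 'a \<Rightarrow> int) \<Rightarrow> (nat \<Rightarrow> nat \<Rightarrow> 'a \<Rightarrow> nat) \<Rightarrow> nat \<Rightarrow> nat \<Rightarrow> 'a
     \<Rightarrow> (nat \<Rightarrow> int) \<times> (nat \<Rightarrow> nat \<Rightarrow> nat)" where
  "erw_hist k X U nx nu \<omega> =
     ((\<lambda>j. if 1 \<le> j \<and> j \<le> nx then X j \<omega> else 0),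
      (\<lambda>m i. if 1 \<le> m \<and> m \<le> nu \<and> 1 \<le> i \<and> i \<le> k then U m i \<omega> else 0))"

definition erw_events ::
  "'a measure \<Rightarrow> nat \<Rightarrow> (nat \<Rightarrow> 'a \<Rightarrow> int) \<Rightarrow> (nat \<Rightarrow> nat \<Rightarrow> 'a \<Rightarrow> nat) \<Rightarrow> nat \<Rightarrow> nat \<Rightarrow> 'a set set" where
  "erw_events M k X U nx nu = {erw_hist k X U nx nu -` A \<inter> space M | A. True}"

definition erw_Cplus :: "nat \<Rightarrow> (nat \<Rightarrow> 'a \<Rightarrow> int) \<Rightarrow> (nat \<Rightarrow> nat \<Rightarrow> 'a \<Rightarrow> nat) \<Rightarrow> nat \<Rightarrow> 'a \<Rightarrow> nat" where
  "erw_Cplus k X U n \<omega> = card {i \<in> {1..k}. X (U n i \<omega>) \<omega> = 1}"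

definition erw_S :: "(nat \<Rightarrow> 'a \<Rightarrow> int) \<Rightarrow> nat \<Rightarrow> 'a \<Rightarrow> int" where
  "erw_S X n \<omega> = (\<Sum>j\<in>{1..n}. X j \<omega>)"

text \<open>The model.  F_n = erw_events M k X U n (n-1) (steps up to n, draws before n);
  after the draws at time n the information is erw_events M k X U n n.\<close>
definition is_erw_k ::
  "'a measure \<Rightarrow> real \<Rightarrow> real \<Rightarrow> nat \<Rightarrow> (real \<Rightarrow> real)
     \<Rightarrow> (nat \<Rightarrow> 'a \<Rightarrow> int) \<Rightarrow> (nat \<Rightarrow> nat \<Rightarrow> 'a \<Rightarrow> nat) \<Rightarrow> bool" where
  "is_erw_k M q p k f X U \<longleftrightarrow>
     prob_space M \<and>
     (\<forall>n. X n \<in> measurable M (count_space UNIV)) \<and>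
     (\<forall>n i. U n i \<in> measurable M (count_space UNIV)) \<and>
     (\<forall>\<omega>\<in>space M. X 0 \<omega> = 0) \<and>
     (\<forall>n\<ge>1. \<forall>\<omega>\<in>space M. X n \<omega> \<in> {-1, 1}) \<and>
     measure M {\<omega>\<in>space M. X 1 \<omega> = 1} = q \<and>
     \<comment> \<open>U n 1, ..., U n k i.i.d. uniform on {1..n}, independent of F_n\<close>
     (\<forall>n\<ge>1. \<forall>E\<in>erw_events M k X U n (n - 1). \<forall>u. (\<forall>i\<in>{1..k}. u i \<in> {1..n}) \<longrightarrow>
        measure M (E \<inter> {\<omega>\<in>space M. \<forall>i\<in>{1..k}. U n i \<omega> = u i})
          = measure M E / real n ^ k) \<and>
     \<comment> \<open>conditional law of X (n+1) given F_n and the draws at time n\<close>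
     (\<forall>n\<ge>1. \<forall>E\<in>erw_events M k X U n n.
        measure M (E \<inter> {\<omega>\<in>space M. X (Suc n) \<omega> = 1})
          = (LINT \<omega>:E|M. p * f (real (erw_Cplus k X U n \<omega>) / real k)
                        + (1 - p) * (1 - f (real (erw_Cplus k X U n \<omega>) / real k))))"

end

theory Submission
  imports Defs
begin


fun Bp :: "(nat \<Rightarrow> real) \<Rightarrow> nat \<Rightarrow> nat \<Rightarrow> real \<Rightarrow> real" where
  "Bp F 0 c y = F c"
| "Bp F (Suc k) c y = y * Bp F k (Suc c) y + (1 - y) * Bp F k c y"

lemma Bp_range:
  assumes "\<And>c. F c \<in> {a..b}" "y \<in> {0..1}"
  shows "Bp F k c y \<in> {a..b}"
proof (induction k arbitrary: c)
  case 0 then show ?case using assms by simp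
next
  case (Suc k)
  have h1: "a \<le> Bp F k (Suc c) y" "Bp F k (Suc c) y \<le> b" "a \<le> Bp F k c y" "Bp F k c y \<le> b"
    using Suc.IH[of c] Suc.IH[of "Suc c"] by auto
  have y: "0 \<le> y" "y \<le> 1" using assms(2) by auto
  have "y * a + (1-y) * a \<le> y * Bp F k (Suc c) y + (1 - y) * Bp F k c y"
    using h1 y by (intro add_mono mult_left_mono) auto
  moreover have "y * Bp F k (Suc c) y + (1 - y) * Bp F k c y \<le> y * b + (1-y) * b"
    using h1 y by (intro add_mono mult_left_mono) auto
  ultimately show ?case by (simp add: algebra_simps)
qed

lemma Bp_lip:
  assumes "\<And>c. F c \<in> {a..b}" "y \<in> {0..1}" "y' \<in> {0..1}"
  shows "\<bar>Bp F k c y - Bp F k c y'\<bar> \<le> real k * (b - a) * \<bar>y - y'\<bar>"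
proof (induction k arbitrary: c)
  case 0 then show ?case by simp
next
  case (Suc k)
  define D1 where "D1 = Bp F k (Suc c) y - Bp F k (Suc c) y'"
  define D0 where "D0 = Bp F k c y - Bp F k c y'"
  define E where "E = Bp F k (Suc c) y' - Bp F k c y'"
  have eq: "Bp F (Suc k) c y - Bp F (Suc k) c y' = y * D1 + (1 - y) * D0 + (y - y') * E"
    unfolding D1_def D0_def E_def by (simp add: algebra_simps)
  have r1: "Bp F k (Suc c) y' \<in> {a..b}" "Bp F k c y' \<in> {a..b}"
    using Bp_range[OF assms(1) assms(3)] by auto
  have E: "\<bar>E\<bar> \<le> b - a" using r1 unfolding E_def by auto
  have y: "0 \<le> y" "y \<le> 1" using assms(2) by auto
  have d1: "\<bar>D1\<bar> \<le> real k * (b - a) * \<bar>y - y'\<bar>" unfolding D1_def by (rule Suc.IH)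
  have d0: "\<bar>D0\<bar> \<le> real k * (b - a) * \<bar>y - y'\<bar>" unfolding D0_def by (rule Suc.IH)
  have "\<bar>y * D1 + (1 - y) * D0 + (y - y') * E\<bar> \<le> y * \<bar>D1\<bar> + (1 - y) * \<bar>D0\<bar> + \<bar>y - y'\<bar> * \<bar>E\<bar>"
    using y by (simp add: abs_mult order.trans[OF abs_triangle_ineq] add_mono abs_triangle_ineq)
  also have "\<dots> \<le> y * (real k * (b - a) * \<bar>y - y'\<bar>) + (1 - y) * (real k * (b - a) * \<bar>y - y'\<bar>) + \<bar>y - y'\<bar> * (b - a)"
    using y d1 d0 E by (intro add_mono mult_left_mono) auto
  also have "\<dots> = real (Suc k) * (b - a) * \<bar>y - y'\<bar>" by (simp add: algebra_simps)
  finally show ?case using eq by simp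
qed

lemma Bp_cont: "continuous_on UNIV (Bp F k c)"
proof (induction k arbitrary: c)
  case 0 then show ?case by simp
next
  case (Suc k)
  have "Bp F (Suc k) c = (\<lambda>y. y * Bp F k (Suc c) y + (1 - y) * Bp F k c y)"
    by (rule ext) simp
  then show ?case using Suc.IH by (auto intro!: continuous_intros)
qed



lemma card_insert_cnt:
  assumes "a \<notin> I" "finite I"
  shows "card {i\<in>insert a I. (g(a:=y)) i \<in> W} = (if y \<in> W then 1 else 0) + card {i\<in>I. g i \<in> W}"
proof -
  have e: "{i\<in>I. (g(a:=y)) i \<in> W} = {i\<in>I. g i \<in> W}" using assms by auto
  show ?thesis
  proof (cases "y \<in> W")
    case True
    then have "{i\<in>insert a I. (g(a:=y)) i \<in> W} = insert a {i\<in>I. g i \<in> W}" using e by auto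
    then show ?thesis using True assms by simp
  next
    case False
    then have "{i\<in>insert a I. (g(a:=y)) i \<in> W} = {i\<in>I. g i \<in> W}" using e assms by auto
    then show ?thesis using False by simp
  qed
qed

lemma Bp_count:
  assumes "finite I" "finite V" "card V > 0" "W \<subseteq> V"
  shows "(\<Sum>u\<in>PiE I (\<lambda>_. V). F (c + card {i\<in>I. u i \<in> W}))
     = real (card V) ^ card I * Bp F (card I) c (real (card W) / real (card V))"
  using assms(1)
proof (induction I arbitrary: c rule: finite_induct)
  case empty then show ?case by simp
next
  case (insert a I)
  let ?n = "real (card V)" and ?m = "real (card W)"
  have fW: "finite W" using assms finite_subset by blast
  have "(\<Sum>u\<in>PiE (insert a I) (\<lambda>_. V). F (c + card {i\<in>insert a I. u i \<in> W}))
      = (\<Sum>(y,g)\<in>V \<times> PiE I (\<lambda>_. V). F (c + card {i\<in>insert a I. (g(a:=y)) i \<in> W}))"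
    unfolding PiE_insert_eq
    using inj_combinator[of a I "\<lambda>_. V"] insert.hyps
    by (subst sum.reindex) (auto intro!: sum.cong)
  also have "\<dots> = (\<Sum>y\<in>V. \<Sum>g\<in>PiE I (\<lambda>_. V). F ((c + (if y \<in> W then 1 else 0)) + card {i\<in>I. g i \<in> W}))"
    unfolding sum.cartesian_product[symmetric]
    by (intro sum.cong refl, unfold card_insert_cnt[OF insert.hyps(2,1)]) (simp add: add.assoc)
  also have "\<dots> = (\<Sum>y\<in>V. ?n ^ card I * Bp F (card I) (c + (if y \<in> W then 1 else 0)) (?m / ?n))"
    using insert.IH by simp
  also have "\<dots> = (\<Sum>y\<in>W. ?n ^ card I * Bp F (card I) (Suc c) (?m / ?n))
       + (\<Sum>y\<in>V - W. ?n ^ card I * Bp F (card I) c (?m / ?n))"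
  proof -
    have "(\<Sum>y\<in>V. ?n ^ card I * Bp F (card I) (c + (if y \<in> W then 1 else 0)) (?m / ?n))
       = (\<Sum>y\<in>V - W. ?n ^ card I * Bp F (card I) (c + (if y \<in> W then 1 else 0)) (?m / ?n))
       + (\<Sum>y\<in>W. ?n ^ card I * Bp F (card I) (c + (if y \<in> W then 1 else 0)) (?m / ?n))"
      by (rule sum.subset_diff[OF assms(4) assms(2)])
    also have "\<dots> = (\<Sum>y\<in>V - W. ?n ^ card I * Bp F (card I) c (?m / ?n))
       + (\<Sum>y\<in>W. ?n ^ card I * Bp F (card I) (Suc c) (?m / ?n))"
      by (intro arg_cong2[where f="(+)"] sum.cong) auto
    finally show ?thesis by simp
  qed
  also have "\<dots> = ?n ^ card I * (?m * Bp F (card I) (Suc c) (?m / ?n) + (?n - ?m) * Bp F (card I) c (?m / ?n))"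
    using assms fW by (simp add: card_Diff_subset of_nat_diff card_mono algebra_simps)
  also have "\<dots> = ?n ^ card (insert a I) * Bp F (card (insert a I)) c (?m / ?n)"
    using insert.hyps assms by (cases "V = {}") (simp_all add: field_simps)
  finally show ?case .
qed



lemma det_step:
  fixes a mu T :: "nat \<Rightarrow> real" and xs L c0 lam :: real
  assumes L: "0 \<le> L" "L < 1"
    and lip: "\<forall>n\<ge>1. \<bar>mu n - xs\<bar> \<le> L * \<bar>a n - xs\<bar>"
    and rel: "\<forall>n\<ge>1. real n * (a n - xs) = c0 + (\<Sum>j\<in>{1..<n}. (mu j - xs)) + T n"
    and c0: "\<bar>c0\<bar> \<le> 2"
    and bd: "\<forall>n. \<bar>a n - xs\<bar> \<le> 2"
    and T: "(\<lambda>n. T n / real n) \<longlonglongrightarrow> 0"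
    and lam: "lam > 0" and N0: "\<forall>n\<ge>N0. \<bar>a n - xs\<bar> \<le> lam"
  shows "\<exists>N'. \<forall>n\<ge>N'. \<bar>a n - xs\<bar> \<le> (1 + L) / 2 * lam"
proof -
  define N where "N = max N0 1"
  have N1: "N \<ge> 1" and NN: "\<forall>n\<ge>N. \<bar>a n - xs\<bar> \<le> lam" using N0 unfolding N_def by auto
  define \<delta> where "\<delta> = (1 - L) * lam / 2"
  have dpos: "\<delta> > 0" using L lam unfolding \<delta>_def by auto
  obtain N2 where N2: "\<forall>n\<ge>N2. norm (T n / real n - 0) < \<delta> / 2"
    using T dpos unfolding LIMSEQ_iff by (meson half_gt_zero)
  have "(\<lambda>n. (2 + 2 * L * real N) / real n) \<longlonglongrightarrow> 0"
    by (intro tendsto_divide_0[OF tendsto_const] filterlim_at_top_imp_at_infinity[OF filterlim_real_sequentially])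
  then obtain N3 where N3: "\<forall>n\<ge>N3. norm ((2 + 2 * L * real N) / real n - 0) < \<delta> / 2"
    using dpos unfolding LIMSEQ_iff by (meson half_gt_zero)
  show ?thesis
  proof (intro exI allI impI)
    fix n assume n: "n \<ge> max N (max N2 N3)"
    then have nN: "n \<ge> N" and n1: "n \<ge> 1" and nN2: "n \<ge> N2" and nN3: "n \<ge> N3" using N1 by auto
    have npos: "real n > 0" using n1 by simp
    have s1: "(\<Sum>j\<in>{1..<N}. \<bar>a j - xs\<bar>) \<le> 2 * real N"
    proof -
      have "(\<Sum>j\<in>{1..<N}. \<bar>a j - xs\<bar>) \<le> (\<Sum>j\<in>{1..<N}. 2)" by (intro sum_mono) (use bd in auto)
      also have "\<dots> \<le> 2 * real N" by simp
      finally show ?thesis .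
    qed
    have s2: "(\<Sum>j\<in>{N..<n}. \<bar>a j - xs\<bar>) \<le> real n * lam"
    proof -
      have "(\<Sum>j\<in>{N..<n}. \<bar>a j - xs\<bar>) \<le> (\<Sum>j\<in>{N..<n}. lam)" by (intro sum_mono) (use NN in auto)
      also have "\<dots> = real (n - N) * lam" by simp
      also have "\<dots> \<le> real n * lam" using lam by (intro mult_right_mono) auto
      finally show ?thesis .
    qed
    have ssum: "(\<Sum>j\<in>{1..<n}. \<bar>a j - xs\<bar>) \<le> 2 * real N + real n * lam"
      using s1 s2 sum.atLeastLessThan_concat[OF N1 nN, of "\<lambda>j. \<bar>a j - xs\<bar>"] by linarith
    have "real n * \<bar>a n - xs\<bar> = \<bar>c0 + (\<Sum>j\<in>{1..<n}. (mu j - xs)) + T n\<bar>"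
    proof -
      have "real n * (a n - xs) = c0 + (\<Sum>j\<in>{1..<n}. (mu j - xs)) + T n" using rel n1 by blast
      moreover have "real n * \<bar>a n - xs\<bar> = \<bar>real n * (a n - xs)\<bar>" by (simp add: abs_mult)
      ultimately show ?thesis by simp
    qed
    also have "\<dots> \<le> \<bar>c0\<bar> + (\<Sum>j\<in>{1..<n}. \<bar>mu j - xs\<bar>) + \<bar>T n\<bar>"
      using sum_abs[of "\<lambda>j. mu j - xs" "{1..<n}"] abs_triangle_ineq[of c0 "\<Sum>j\<in>{1..<n}. (mu j - xs)"]
        abs_triangle_ineq[of "c0 + (\<Sum>j\<in>{1..<n}. (mu j - xs))" "T n"] by linarith
    also have "\<dots> \<le> 2 + (\<Sum>j\<in>{1..<n}. L * \<bar>a j - xs\<bar>) + \<bar>T n\<bar>"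
      using c0 lip by (intro add_mono sum_mono) auto
    also have "\<dots> = 2 + L * (\<Sum>j\<in>{1..<n}. \<bar>a j - xs\<bar>) + \<bar>T n\<bar>"
      by (simp add: sum_distrib_left)
    also have "\<dots> \<le> 2 + L * (2 * real N + real n * lam) + \<bar>T n\<bar>"
      using ssum L by (intro add_mono mult_left_mono) auto
    finally have ineq: "real n * \<bar>a n - xs\<bar> \<le> 2 + L * (2 * real N + real n * lam) + \<bar>T n\<bar>" .
    have t1: "\<bar>T n\<bar> / real n < \<delta> / 2" using N2 nN2 npos by (simp add: abs_divide)
    have t2: "(2 + 2 * L * real N) / real n < \<delta> / 2" using N3 nN3 L by auto
    have "\<bar>a n - xs\<bar> \<le> (2 + L * (2 * real N + real n * lam) + \<bar>T n\<bar>) / real n"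
      using ineq npos by (simp add: field_simps)
    also have "\<dots> = L * lam + (2 + 2 * L * real N) / real n + \<bar>T n\<bar> / real n"
      using npos by (simp add: field_simps)
    also have "\<dots> \<le> L * lam + \<delta>" using t1 t2 by linarith
    also have "\<dots> = (1 + L) / 2 * lam" unfolding \<delta>_def by (simp add: field_simps)
    finally show "\<bar>a n - xs\<bar> \<le> (1 + L) / 2 * lam" .
  qed
qed

lemma det_conv:
  fixes a mu T :: "nat \<Rightarrow> real" and xs L c0 :: real
  assumes L: "0 \<le> L" "L < 1"
    and lip: "\<forall>n\<ge>1. \<bar>mu n - xs\<bar> \<le> L * \<bar>a n - xs\<bar>"
    and rel: "\<forall>n\<ge>1. real n * (a n - xs) = c0 + (\<Sum>j\<in>{1..<n}. (mu j - xs)) + T n"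
    and c0: "\<bar>c0\<bar> \<le> 2"
    and bd: "\<forall>n. \<bar>a n - xs\<bar> \<le> 2"
    and T: "(\<lambda>n. T n / real n) \<longlonglongrightarrow> 0"
  shows "a \<longlonglongrightarrow> xs"
proof -
  define r where "r = (1 + L) / 2"
  have r: "0 < r" "r < 1" using L unfolding r_def by auto
  have it: "\<exists>N. \<forall>n\<ge>N. \<bar>a n - xs\<bar> \<le> 2 * r ^ i" for i
  proof (induction i)
    case 0 then show ?case using bd by auto
  next
    case (Suc i)
    then obtain N where "\<forall>n\<ge>N. \<bar>a n - xs\<bar> \<le> 2 * r ^ i" by blast
    from det_step[OF L lip rel c0 bd T _ this] r
    obtain N' where "\<forall>n\<ge>N'. \<bar>a n - xs\<bar> \<le> (1 + L) / 2 * (2 * r ^ i)" by auto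
    then show ?case unfolding r_def by (auto simp: algebra_simps)
  qed
  show ?thesis unfolding LIMSEQ_iff
  proof (intro allI impI)
    fix e :: real assume e: "e > 0"
    obtain i where i: "r ^ i < e / 2" using real_arch_pow_inv[of "e/2" r] e r by auto
    obtain N where N: "\<forall>n\<ge>N. \<bar>a n - xs\<bar> \<le> 2 * r ^ i" using it by blast
    have "\<forall>n\<ge>N. norm (a n - xs) < e"
    proof (intro allI impI)
      fix n assume "n \<ge> N"
      then have "\<bar>a n - xs\<bar> \<le> 2 * r ^ i" using N by blast
      then show "norm (a n - xs) < e" using i by simp
    qed
    then show "\<exists>no. \<forall>n\<ge>no. norm (a n - xs) < e" by blast
  qed
qed



locale erwl =
  fixes M :: "'a measure" and q p :: real and k :: nat and f :: "real \<Rightarrow> real"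
    and X :: "nat \<Rightarrow> 'a \<Rightarrow> int" and U :: "nat \<Rightarrow> nat \<Rightarrow> 'a \<Rightarrow> nat"
  assumes E: "is_erw_k M q p k f X U" and k1: "k \<ge> 1" and p0: "0 < p" and p1: "p < 1"
    and fr: "\<forall>x\<in>{0..1}. f x \<in> {0..1}"
begin

sublocale prob_space M using E unfolding is_erw_k_def by auto

lemma Xm[measurable]: "X n \<in> measurable M (count_space UNIV)" using E unfolding is_erw_k_def by auto
lemma Um[measurable]: "U n i \<in> measurable M (count_space UNIV)" using E unfolding is_erw_k_def by auto
lemma Xpm: "n \<ge> 1 \<Longrightarrow> \<omega> \<in> space M \<Longrightarrow> X n \<omega> \<in> {-1, 1}" using E unfolding is_erw_k_def by auto

lemma model_U: "n \<ge> 1 \<Longrightarrow> E \<in> erw_events M k X U n (n - 1) \<Longrightarrow> (\<forall>i\<in>{1..k}. u i \<in> {1..n}) \<Longrightarrow>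
        measure M (E \<inter> {\<omega>\<in>space M. \<forall>i\<in>{1..k}. U n i \<omega> = u i}) = measure M E / real n ^ k"
  using E unfolding is_erw_k_def by auto

definition Phi :: "nat \<Rightarrow> real" where
  "Phi c = p * f (real c / real k) + (1 - p) * (1 - f (real c / real k))"

lemma model_X: "n \<ge> 1 \<Longrightarrow> E \<in> erw_events M k X U n n \<Longrightarrow>
        measure M (E \<inter> {\<omega>\<in>space M. X (Suc n) \<omega> = 1}) = (LINT \<omega>:E|M. Phi (erw_Cplus k X U n \<omega>))"
  using E unfolding is_erw_k_def Phi_def by auto

definition lo where "lo = min p (1 - p)"
definition hi where "hi = max p (1 - p)"

lemma Phi_range: "c \<le> k \<Longrightarrow> Phi c \<in> {lo..hi}"
proof -
  assume c: "c \<le> k"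
  have "real c / real k \<in> {0..1}" using c k1 by auto
  then have fv: "0 \<le> f (real c / real k)" "f (real c / real k) \<le> 1" using fr by auto
  define t where "t = f (real c / real k)"
  have "Phi c = p * t + (1 - p) * (1 - t)" unfolding Phi_def t_def by simp
  moreover have "lo \<le> p * t + (1 - p) * (1 - t)"
  proof -
    have "t * lo \<le> t * p" "(1 - t) * lo \<le> (1 - t) * (1 - p)"
      using fv unfolding t_def[symmetric] lo_def by (intro mult_left_mono; simp)+
    then show ?thesis by (simp add: algebra_simps)
  qed
  moreover have "p * t + (1 - p) * (1 - t) \<le> hi"
  proof -
    have "t * p \<le> t * hi" "(1 - t) * (1 - p) \<le> (1 - t) * hi"
      using fv unfolding t_def[symmetric] hi_def by (intro mult_left_mono; simp)+
    then show ?thesis by (simp add: algebra_simps)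
  qed
  ultimately show ?thesis by simp
qed

definition Fm :: "nat \<Rightarrow> real" where "Fm c = Phi (min c k)"
definition G :: "real \<Rightarrow> real" where "G y = Bp Fm k 0 y"

lemma Fm_range: "Fm c \<in> {lo..hi}" unfolding Fm_def by (rule Phi_range) simp

lemma lohi: "0 < lo" "lo \<le> hi" "hi < 1" "hi - lo = \<bar>2 * p - 1\<bar>"
  using p0 p1 unfolding lo_def hi_def by auto

lemma G_range: "y \<in> {0..1} \<Longrightarrow> G y \<in> {lo..hi}"
  unfolding G_def using Bp_range[OF Fm_range] by auto

lemma G_lip: "y \<in> {0..1} \<Longrightarrow> y' \<in> {0..1} \<Longrightarrow> \<bar>G y - G y'\<bar> \<le> real k * \<bar>2 * p - 1\<bar> * \<bar>y - y'\<bar>"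
  unfolding G_def using Bp_lip[where F=Fm and a=lo and b=hi and y=y and y'=y' and k=k and c=0, OF Fm_range] lohi by auto

lemma G_cont: "continuous_on UNIV G"
  unfolding G_def[abs_def] by (rule Bp_cont)

definition Ex :: "nat \<Rightarrow> (nat \<Rightarrow> int) \<Rightarrow> 'a set" where
  "Ex n x = {\<omega>\<in>space M. \<forall>j\<in>{1..n}. X j \<omega> = x j}"

lemma Ex_sets[measurable]: "Ex n x \<in> sets M"
  unfolding Ex_def by measurable

lemma Ex_events: "Ex n x \<in> erw_events M k X U n nu"
  unfolding erw_events_def mem_Collect_eq
  by (rule exI[of _ "{h. \<forall>j\<in>{1..n}. fst h j = x j}"]) (auto simp: Ex_def erw_hist_def)

lemma Cplus_meas: "erw_Cplus k X U n \<in> measurable M (count_space UNIV)"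
proof -
  have Y: "(\<lambda>\<omega>. X (U n i \<omega>) \<omega>) \<in> measurable M (count_space UNIV)" for i
    by (rule measurable_compose_countable[OF Xm Um])
  have eq: "erw_Cplus k X U n \<omega> = (\<Sum>i\<in>{1..k}. (if X (U n i \<omega>) \<omega> = 1 then 1 else 0))" for \<omega>
    unfolding erw_Cplus_def by (subst sum.inter_filter[symmetric]) auto
  show ?thesis unfolding eq[abs_def] using Y by measurable
qed

end


context erwl begin

lemma cond:
  assumes n: "n \<ge> 1"
  shows "measure M (Ex n x \<inter> {\<omega>\<in>space M. X (Suc n) \<omega> = 1})
         = measure M (Ex n x) * G (real (card {j\<in>{1..n}. x j = 1}) / real n)"
proof -
  define E where "E = Ex n x"
  define P where "P = PiE {1..k} (\<lambda>_. {1..n::nat})"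
  define Eu where "Eu u = E \<inter> {\<omega>\<in>space M. \<forall>i\<in>{1..k}. U n i \<omega> = u i}" for u
  define W where "W = {v\<in>{1..n}. x v = 1}"
  define cnt where "cnt u = card {i\<in>{1..k}. x (u i) = 1}" for u :: "nat \<Rightarrow> nat"
  have E_sets[measurable]: "E \<in> sets M" unfolding E_def by measurable
  have Eu_sets[measurable]: "Eu u \<in> sets M" for u unfolding Eu_def by measurable
  have EuE: "Eu u \<subseteq> E" for u unfolding Eu_def by auto
  have finP: "finite P" unfolding P_def by (intro finite_PiE) auto
  have mEu: "measure M (Eu u) = measure M E / real n ^ k" if "u \<in> P" for u
    unfolding Eu_def E_def
    by (rule model_U[OF n Ex_events]) (use that in \<open>auto simp: P_def PiE_def\<close>)
  have cardP: "card P = n ^ k" unfolding P_def by (simp add: card_PiE)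
  have disj: "disjoint_family_on Eu P"
  proof (unfold disjoint_family_on_def, intro ballI impI)
    fix u u' assume uu: "u \<in> P" "u' \<in> P" "u \<noteq> u'"
    then obtain i where i: "i \<in> {1..k}" "u i \<noteq> u' i"
      unfolding P_def by (meson PiE_ext)
    then show "Eu u \<inter> Eu u' = {}" unfolding Eu_def by auto
  qed
  have npos: "real n ^ k > 0" using n by simp
  have sumEu: "(\<Sum>u\<in>P. measure M (Eu u)) = measure M E"
    using mEu cardP npos by simp
  have UN: "measure M (\<Union>u\<in>P. Eu u) = measure M E"
  proof -
    have "Eu ` P \<subseteq> sets M" by auto
    then show ?thesis using finite_measure_finite_Union[OF finP _ disj] sumEu by simp
  qed
  define N where "N = E - (\<Union>u\<in>P. Eu u)"
  have UNs: "(\<Union>u\<in>P. Eu u) \<in> sets M" by (rule sets.finite_UN[OF finP Eu_sets])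
  have N_sets: "N \<in> sets M" unfolding N_def using UNs by auto
  have "measure M N = 0" unfolding N_def
    using finite_measure_Diff[OF E_sets UNs] UN EuE by (simp add: UN_least)
  then have N_null: "N \<in> null_sets M" using N_sets by (auto simp: emeasure_eq_measure)
  have AE: "AE \<omega> in M. indicator E \<omega> * Phi (erw_Cplus k X U n \<omega>)
              = (\<Sum>u\<in>P. indicator (Eu u) \<omega> * Phi (cnt u))"
  proof (rule AE_I'[OF N_null], safe)
    fix \<omega> assume \<omega>: "\<omega> \<in> space M"
      and ne: "indicator E \<omega> * Phi (erw_Cplus k X U n \<omega>) \<noteq> (\<Sum>u\<in>P. indicator (Eu u) \<omega> * Phi (cnt u))"
    show "\<omega> \<in> N"
    proof (rule ccontr)
      assume nN: "\<omega> \<notin> N"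
      show False
      proof (cases "\<omega> \<in> E")
        case False
        then have "\<omega> \<notin> Eu u" for u using EuE by auto
        then show False using ne False by simp
      next
        case True
        then obtain u0 where u0: "u0 \<in> P" "\<omega> \<in> Eu u0" using nN unfolding N_def by auto
        have uniq: "\<omega> \<notin> Eu u" if "u \<in> P" "u \<noteq> u0" for u
          using disj u0 that unfolding disjoint_family_on_def by blast
        have s: "(\<Sum>u\<in>P. indicator (Eu u) \<omega> * Phi (cnt u)) = Phi (cnt u0)"
          using sum.remove[OF finP u0(1), of "\<lambda>u. indicator (Eu u) \<omega> * Phi (cnt u)"] uniq u0
          by (simp add: sum.neutral)
        have "erw_Cplus k X U n \<omega> = cnt u0"
          unfolding erw_Cplus_def cnt_def
        proof (intro arg_cong[where f=card] Collect_cong conj_cong refl)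
          fix i assume i: "i \<in> {1..k}"
          have "U n i \<omega> = u0 i" using u0(2) i unfolding Eu_def by auto
          moreover have "u0 i \<in> {1..n}" using u0(1) i unfolding P_def by auto
          moreover have "\<forall>j\<in>{1..n}. X j \<omega> = x j" using True unfolding E_def Ex_def by auto
          ultimately show "(X (U n i \<omega>) \<omega> = 1) = (x (u0 i) = 1)" by auto
        qed
        then show False using ne s True by simp
      qed
    qed
  qed
  have PhiC_meas: "(\<lambda>\<omega>. Phi (erw_Cplus k X U n \<omega>)) \<in> borel_measurable M"
    by (rule measurable_compose[OF Cplus_meas borel_measurable_count_space])
  have "measure M (E \<inter> {\<omega>\<in>space M. X (Suc n) \<omega> = 1}) = (LINT \<omega>:E|M. Phi (erw_Cplus k X U n \<omega>))"
    unfolding E_def by (rule model_X[OF n Ex_events])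
  also have "\<dots> = integral\<^sup>L M (\<lambda>\<omega>. indicator E \<omega> * Phi (erw_Cplus k X U n \<omega>))"
    unfolding set_lebesgue_integral_def by simp
  also have "\<dots> = integral\<^sup>L M (\<lambda>\<omega>. \<Sum>u\<in>P. indicator (Eu u) \<omega> * Phi (cnt u))"
  proof (rule integral_cong_AE[OF _ _ AE])
    show "(\<lambda>\<omega>. indicator E \<omega> * Phi (erw_Cplus k X U n \<omega>)) \<in> borel_measurable M"
      using PhiC_meas by (intro borel_measurable_times) auto
    show "(\<lambda>\<omega>. \<Sum>u\<in>P. indicator (Eu u) \<omega> * Phi (cnt u)) \<in> borel_measurable M"
      by (intro borel_measurable_sum borel_measurable_times) auto
  qed
  also have "\<dots> = (\<Sum>u\<in>P. measure M (Eu u) * Phi (cnt u))"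
  proof -
    have "integral\<^sup>L M (\<lambda>\<omega>. \<Sum>u\<in>P. indicator (Eu u) \<omega> * Phi (cnt u))
        = (\<Sum>u\<in>P. integral\<^sup>L M (\<lambda>\<omega>. indicator (Eu u) \<omega> * Phi (cnt u)))"
      by (rule Bochner_Integration.integral_sum[where f="\<lambda>u \<omega>. indicator (Eu u) \<omega> * Phi (cnt u)"]) (intro integrable_mult_left integrable_real_indicator Eu_sets; simp add: emeasure_eq_measure)
    also have "\<dots> = (\<Sum>u\<in>P. measure M (Eu u) * Phi (cnt u))"
    proof (rule sum.cong[OF refl])
      fix u
      have "integral\<^sup>L M (\<lambda>\<omega>. indicator (Eu u) \<omega> * Phi (cnt u)) = integral\<^sup>L M (indicator (Eu u)) * Phi (cnt u)"
        by (rule integral_mult_left_zero)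
      also have "\<dots> = measure M (Eu u) * Phi (cnt u)"
        using sets.sets_into_space[OF Eu_sets[of u]] by (simp add: Int_absorb2)
      finally show "integral\<^sup>L M (\<lambda>\<omega>. indicator (Eu u) \<omega> * Phi (cnt u)) = measure M (Eu u) * Phi (cnt u)" .
    qed
    finally show ?thesis .
  qed
  also have "\<dots> = measure M E / real n ^ k * (\<Sum>u\<in>P. Phi (cnt u))"
    using mEu by (simp add: sum_distrib_left)
  also have "(\<Sum>u\<in>P. Phi (cnt u)) = (\<Sum>u\<in>P. Fm (0 + card {i\<in>{1..k}. u i \<in> W}))"
  proof (rule sum.cong[OF refl])
    fix u assume u: "u \<in> P"
    have "{i\<in>{1..k}. u i \<in> W} = {i\<in>{1..k}. x (u i) = 1}"
      using u unfolding P_def W_def by auto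
    moreover have "card {i\<in>{1..k}. x (u i) = 1} \<le> k"
      by (metis (no_types, lifting) card_atLeastAtMost card_mono diff_Suc_1 finite_atLeastAtMost mem_Collect_eq subsetI)
    ultimately show "Phi (cnt u) = Fm (0 + card {i\<in>{1..k}. u i \<in> W})"
      unfolding Fm_def cnt_def by simp
  qed
  also have "\<dots> = real n ^ k * G (real (card W) / real n)"
  proof -
    have "W \<subseteq> {1..n}" unfolding W_def by auto
    from Bp_count[of "{1..k}" "{1..n}" W Fm 0, OF _ _ _ this] n
    show ?thesis unfolding P_def G_def by simp
  qed
  finally show ?thesis unfolding E_def W_def using npos n by (simp add: not_le Suc_le_eq)
qed

end


context erwl begin

definition Xv :: "'a \<Rightarrow> nat \<Rightarrow> int" where "Xv \<omega> = (\<lambda>j. X j \<omega>)"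
definition loc :: "nat \<Rightarrow> ((nat \<Rightarrow> int) \<Rightarrow> real) \<Rightarrow> bool" where
  "loc n h \<longleftrightarrow> (\<forall>x y. (\<forall>j\<in>{1..n}. x j = y j) \<longrightarrow> h x = h y)"
definition Pn :: "nat \<Rightarrow> (nat \<Rightarrow> int) set" where "Pn n = PiE {1..n} (\<lambda>_. {-1, 1})"
definition mu_v :: "nat \<Rightarrow> (nat \<Rightarrow> int) \<Rightarrow> real" where
  "mu_v j x = 2 * G (real (card {i\<in>{1..j}. x i = 1}) / real j) - 1"

lemma finPn: "finite (Pn n)" unfolding Pn_def by (intro finite_PiE) auto

lemma decomp:
  assumes \<omega>: "\<omega> \<in> space M" and h: "loc n h"
  shows "h (Xv \<omega>) = (\<Sum>x\<in>Pn n. indicator (Ex n x) \<omega> * h x)"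
proof -
  define x0 where "x0 = restrict (Xv \<omega>) {1..n}"
  have x0P: "x0 \<in> Pn n" unfolding x0_def Pn_def Xv_def using Xpm[OF _ \<omega>] by auto
  have iff: "\<omega> \<in> Ex n x \<longleftrightarrow> x = x0" if "x \<in> Pn n" for x
  proof
    assume "\<omega> \<in> Ex n x"
    then have "\<forall>j\<in>{1..n}. X j \<omega> = x j" unfolding Ex_def by auto
    then show "x = x0" using that unfolding x0_def Pn_def Xv_def
      by (intro PiE_ext[of _ "{1..n}" "\<lambda>_. {-1,1}"]) auto
  next
    assume "x = x0" then show "\<omega> \<in> Ex n x" using \<omega> unfolding Ex_def x0_def Xv_def by auto
  qed
  have "(\<Sum>x\<in>Pn n. indicator (Ex n x) \<omega> * h x) = (\<Sum>x\<in>Pn n. if x = x0 then h x else 0)"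
    by (intro sum.cong refl) (use iff in auto)
  also have "\<dots> = h x0" using x0P finPn by simp
  also have "h x0 = h (Xv \<omega>)" using h unfolding loc_def x0_def by auto
  finally show ?thesis by simp
qed

lemma loc_meas: "loc n h \<Longrightarrow> (\<lambda>\<omega>. h (Xv \<omega>)) \<in> borel_measurable M"
proof -
  assume h: "loc n h"
  have "(\<lambda>\<omega>. \<Sum>x\<in>Pn n. indicator (Ex n x) \<omega> * h x) \<in> borel_measurable M"
    by (intro borel_measurable_sum borel_measurable_times) auto
  then show ?thesis by (rule measurable_cong[THEN iffD1, rotated]) (simp add: decomp[OF _ h])
qed

lemma Xr_meas[measurable]: "(\<lambda>\<omega>. real_of_int (X n \<omega>)) \<in> borel_measurable M"
  by (rule measurable_compose[OF Xm borel_measurable_count_space])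

lemma intb: "(g :: 'a \<Rightarrow> real) \<in> borel_measurable M \<Longrightarrow> (\<And>\<omega>. \<omega> \<in> space M \<Longrightarrow> \<bar>g \<omega>\<bar> \<le> B) \<Longrightarrow> integrable M g"
  by (rule integrable_const_bound[where B=B]) auto

lemma G01: "y \<in> {0..1} \<Longrightarrow> G y \<in> {0..1}"
  using G_range lohi by fastforce

lemma mu_bd: "\<bar>mu_v j x\<bar> \<le> 1"
proof -
  have "card {i\<in>{1..j}. x i = 1} \<le> j"
    by (metis (no_types, lifting) card_atLeastAtMost card_mono diff_Suc_1 finite_atLeastAtMost mem_Collect_eq subsetI)
  then have "real (card {i\<in>{1..j}. x i = 1}) / real j \<in> {0..1}"
    by (cases "j = 0") (auto simp: divide_le_eq_1)
  then show ?thesis using G01 unfolding mu_v_def by fastforce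
qed

lemma loc_mu: "loc n (mu_v n)"
  unfolding loc_def mu_v_def
proof (intro allI impI)
  fix x y :: "nat \<Rightarrow> int" assume "\<forall>j\<in>{1..n}. x j = y j"
  then have "{i\<in>{1..n}. x i = 1} = {i\<in>{1..n}. y i = 1}" by auto
  then show "2 * G (real (card {i\<in>{1..n}. x i = 1}) / real n) - 1 = 2 * G (real (card {i\<in>{1..n}. y i = 1}) / real n) - 1"
    by simp
qed

lemma loc_mono: "loc m h \<Longrightarrow> m \<le> n \<Longrightarrow> loc n h"
  unfolding loc_def by auto

lemma key:
  assumes n: "n \<ge> 1" and h: "loc n h"
  shows "integral\<^sup>L M (\<lambda>\<omega>. h (Xv \<omega>) * real_of_int (X (Suc n) \<omega>))
       = integral\<^sup>L M (\<lambda>\<omega>. h (Xv \<omega>) * mu_v n (Xv \<omega>))"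
proof -
  have intX: "integral\<^sup>L M (\<lambda>\<omega>. indicator (Ex n x) \<omega> * real_of_int (X (Suc n) \<omega>))
      = measure M (Ex n x) * mu_v n x" for x
  proof -
    define A where "A = Ex n x \<inter> {\<omega>\<in>space M. X (Suc n) \<omega> = 1}"
    have A_sets: "A \<in> sets M" unfolding A_def by measurable
    have "integral\<^sup>L M (\<lambda>\<omega>. indicator (Ex n x) \<omega> * real_of_int (X (Suc n) \<omega>))
        = integral\<^sup>L M (\<lambda>\<omega>. 2 * indicator A \<omega> - indicator (Ex n x) \<omega>)"
    proof (rule Bochner_Integration.integral_cong[OF refl])
      fix \<omega> assume \<omega>: "\<omega> \<in> space M"
      have "X (Suc n) \<omega> \<in> {-1, 1}" using Xpm[OF _ \<omega>] by simp
      then show "indicator (Ex n x) \<omega> * real_of_int (X (Suc n) \<omega>) = 2 * indicator A \<omega> - indicator (Ex n x) \<omega>"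
        unfolding A_def using \<omega> by (auto simp: indicator_def)
    qed
    also have "\<dots> = 2 * measure M A - measure M (Ex n x)"
      using A_sets sets.sets_into_space[OF A_sets] sets.sets_into_space[OF Ex_sets[of n x]]
      by (subst Bochner_Integration.integral_diff) (auto simp: emeasure_eq_measure Int_absorb2)
    also have "\<dots> = measure M (Ex n x) * mu_v n x"
      unfolding A_def cond[OF n] mu_v_def by (simp add: algebra_simps)
    finally show ?thesis .
  qed
  have "integral\<^sup>L M (\<lambda>\<omega>. h (Xv \<omega>) * real_of_int (X (Suc n) \<omega>))
      = integral\<^sup>L M (\<lambda>\<omega>. \<Sum>x\<in>Pn n. h x * (indicator (Ex n x) \<omega> * real_of_int (X (Suc n) \<omega>)))"
    by (intro Bochner_Integration.integral_cong refl) (simp add: decomp[OF _ h] sum_distrib_left sum_distrib_right algebra_simps)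
  also have "\<dots> = (\<Sum>x\<in>Pn n. h x * integral\<^sup>L M (\<lambda>\<omega>. indicator (Ex n x) \<omega> * real_of_int (X (Suc n) \<omega>)))"
  proof (subst Bochner_Integration.integral_sum)
    fix x show "integrable M (\<lambda>\<omega>. h x * (indicator (Ex n x) \<omega> * real_of_int (X (Suc n) \<omega>)))"
    proof (intro integrable_mult_right intb[where B=1])
      show "(\<lambda>\<omega>. indicator (Ex n x) \<omega> * real_of_int (X (Suc n) \<omega>)) \<in> borel_measurable M" by measurable
      fix \<omega> assume "\<omega> \<in> space M"
      then have "X (Suc n) \<omega> \<in> {-1, 1}" using Xpm[of "Suc n"] by simp
      then show "\<bar>indicator (Ex n x) \<omega> * real_of_int (X (Suc n) \<omega>)\<bar> \<le> 1"
        by (auto simp: indicator_def)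
    qed
  qed simp
  also have "\<dots> = (\<Sum>x\<in>Pn n. measure M (Ex n x) * (h x * mu_v n x))"
    unfolding intX by (simp add: algebra_simps)
  also have "\<dots> = (\<Sum>x\<in>Pn n. integral\<^sup>L M (\<lambda>\<omega>. indicator (Ex n x) \<omega> * (h x * mu_v n x)))"
    using sets.sets_into_space[OF Ex_sets[of n]] by (simp add: Int_absorb2)
  also have "\<dots> = integral\<^sup>L M (\<lambda>\<omega>. \<Sum>x\<in>Pn n. indicator (Ex n x) \<omega> * (h x * mu_v n x))"
    by (rule Bochner_Integration.integral_sum[symmetric])
       (auto intro!: integrable_mult_left simp: emeasure_eq_measure)
  also have "\<dots> = integral\<^sup>L M (\<lambda>\<omega>. h (Xv \<omega>) * mu_v n (Xv \<omega>))"
  proof (intro Bochner_Integration.integral_cong refl)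
    fix \<omega> assume \<omega>: "\<omega> \<in> space M"
    have "loc n (\<lambda>x. h x * mu_v n x)" using h loc_mu unfolding loc_def by metis
    from decomp[OF \<omega> this] show "(\<Sum>x\<in>Pn n. indicator (Ex n x) \<omega> * (h x * mu_v n x)) = h (Xv \<omega>) * mu_v n (Xv \<omega>)"
      by simp
  qed
  finally show ?thesis .
qed

end


lemma quart_bound:
  fixes t e :: real
  assumes "\<bar>e\<bar> \<le> 2"
  shows "(t + e) ^ 4 \<le> t ^ 4 + 4 * t ^ 3 * e + 40 * t ^ 2 + 32"
proof -
  have e2: "e ^ 2 \<le> 4"
  proof -
    have "\<bar>e\<bar> ^ 2 \<le> 2 ^ 2" using assms by (intro power_mono) auto
    then show ?thesis by simp
  qed
  have e2': "0 \<le> e ^ 2" by simp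
  have a: "6 * t^2 * e^2 \<le> 24 * t^2"
  proof -
    have "e^2 * t^2 \<le> 4 * t^2" by (rule mult_right_mono[OF e2]) simp
    then show ?thesis by simp
  qed
  have b: "\<bar>4 * t * e ^ 3\<bar> \<le> 32 * \<bar>t\<bar>"
  proof -
    have "\<bar>e ^ 3\<bar> = \<bar>e\<bar> * e^2" by (simp add: abs_mult power2_eq_square power3_eq_cube)
    also have "\<dots> \<le> 2 * 4" using assms e2 by (intro mult_mono) auto
    finally have "\<bar>e ^ 3\<bar> \<le> 8" by simp
    then have "\<bar>t\<bar> * \<bar>e ^ 3\<bar> \<le> \<bar>t\<bar> * 8" by (intro mult_left_mono) auto
    then show ?thesis by (simp add: abs_mult)
  qed
  have c: "32 * \<bar>t\<bar> \<le> 16 * t^2 + 16"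
  proof -
    have "0 \<le> (\<bar>t\<bar> - 1)^2" by simp
    moreover have "(\<bar>t\<bar> - 1)^2 = \<bar>t\<bar>^2 - 2 * \<bar>t\<bar> + 1" by (simp add: power2_diff)
    ultimately show ?thesis by simp
  qed
  have d: "e ^ 4 \<le> 16"
  proof -
    have "e^4 = e^2 * e^2" by (simp add: power_def)
    also have "\<dots> \<le> 4 * 4" using e2 e2' by (intro mult_mono) auto
    finally show ?thesis by simp
  qed
  have "(t + e) ^ 4 = t ^ 4 + 4 * t ^ 3 * e + 6 * t^2 * e^2 + 4 * t * e ^ 3 + e ^ 4"
    by (simp add: power_def algebra_simps)
  moreover have "4 * t * e ^ 3 \<le> \<bar>4 * t * e ^ 3\<bar>" by (rule abs_ge_self)
  ultimately show ?thesis using a b c d by linarith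
qed

context erwl begin

definition Tv :: "nat \<Rightarrow> (nat \<Rightarrow> int) \<Rightarrow> real" where
  "Tv n x = (\<Sum>j\<in>{1..<n}. (real_of_int (x (Suc j)) - mu_v j x))"
definition T :: "nat \<Rightarrow> 'a \<Rightarrow> real" where "T n \<omega> = Tv n (Xv \<omega>)"
definition xi :: "nat \<Rightarrow> 'a \<Rightarrow> real" where
  "xi n \<omega> = real_of_int (X (Suc n) \<omega>) - mu_v n (Xv \<omega>)"

lemma loc_Tv: "loc n (Tv n)"
  unfolding loc_def Tv_def
proof (intro allI impI sum.cong refl)
  fix x y :: "nat \<Rightarrow> int" and j assume xy: "\<forall>j\<in>{1..n}. x j = y j" and j: "j \<in> {1..<n}"
  have "x (Suc j) = y (Suc j)" using xy j by auto
  moreover have "mu_v j x = mu_v j y" using loc_mu[of j] xy j unfolding loc_def by auto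
  ultimately show "real_of_int (x (Suc j)) - mu_v j x = real_of_int (y (Suc j)) - mu_v j y" by simp
qed

lemma loc_pow: "loc n h \<Longrightarrow> loc n (\<lambda>x. h x ^ m)" unfolding loc_def by metis

lemma T_meas[measurable]: "T n \<in> borel_measurable M"
  unfolding T_def[abs_def] by (rule loc_meas[OF loc_Tv])

lemma mu_meas[measurable]: "(\<lambda>\<omega>. mu_v n (Xv \<omega>)) \<in> borel_measurable M"
  by (rule loc_meas[OF loc_mu])

lemma xi_meas[measurable]: "xi n \<in> borel_measurable M"
  unfolding xi_def[abs_def] by measurable

lemma xi_bd: "\<omega> \<in> space M \<Longrightarrow> \<bar>xi n \<omega>\<bar> \<le> 2"
proof -
  assume \<omega>: "\<omega> \<in> space M"
  have "X (Suc n) \<omega> \<in> {-1, 1}" using Xpm[OF _ \<omega>] by simp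
  then have "\<bar>real_of_int (X (Suc n) \<omega>)\<bar> \<le> 1" by auto
  then show ?thesis unfolding xi_def using mu_bd[of n "Xv \<omega>"] by linarith
qed

lemma T_bd: "\<omega> \<in> space M \<Longrightarrow> \<bar>T n \<omega>\<bar> \<le> 2 * real n"
proof -
  assume \<omega>: "\<omega> \<in> space M"
  have "\<bar>T n \<omega>\<bar> \<le> (\<Sum>j\<in>{1..<n}. \<bar>real_of_int (X (Suc j) \<omega>) - mu_v j (Xv \<omega>)\<bar>)"
    unfolding T_def Tv_def Xv_def by (rule sum_abs)
  also have "\<dots> \<le> (\<Sum>j\<in>{1..<n}. 2)"
    using xi_bd[OF \<omega>] unfolding xi_def Xv_def by (intro sum_mono) auto
  also have "\<dots> \<le> 2 * real n" by simp
  finally show ?thesis .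
qed

lemma T_Suc: "n \<ge> 1 \<Longrightarrow> T (Suc n) \<omega> = T n \<omega> + xi n \<omega>"
  unfolding T_def Tv_def xi_def Xv_def by simp

lemma T_1: "T (Suc 0) \<omega> = 0" unfolding T_def Tv_def by simp

lemma orth:
  assumes n: "n \<ge> 1"
  shows "integral\<^sup>L M (\<lambda>\<omega>. T n \<omega> ^ m * xi n \<omega>) = 0"
proof -
  have i1: "integrable M (\<lambda>\<omega>. T n \<omega> ^ m * real_of_int (X (Suc n) \<omega>))"
  proof (rule intb[where B="(2 * real n) ^ m"])
    show "(\<lambda>\<omega>. T n \<omega> ^ m * real_of_int (X (Suc n) \<omega>)) \<in> borel_measurable M" by measurable
    fix \<omega> assume \<omega>: "\<omega> \<in> space M"
    have "X (Suc n) \<omega> \<in> {-1, 1}" using Xpm[OF _ \<omega>] by simp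
    then have x1: "\<bar>real_of_int (X (Suc n) \<omega>)\<bar> \<le> 1" by auto
    have "\<bar>T n \<omega> ^ m\<bar> \<le> (2 * real n) ^ m" unfolding power_abs by (intro power_mono T_bd[OF \<omega>]) simp
    then have "\<bar>T n \<omega> ^ m\<bar> * \<bar>real_of_int (X (Suc n) \<omega>)\<bar> \<le> (2 * real n) ^ m * 1"
      using x1 by (intro mult_mono) auto
    then show "\<bar>T n \<omega> ^ m * real_of_int (X (Suc n) \<omega>)\<bar> \<le> (2 * real n) ^ m"
      by (simp add: abs_mult)
  qed
  have i2: "integrable M (\<lambda>\<omega>. T n \<omega> ^ m * mu_v n (Xv \<omega>))"
  proof (rule intb[where B="(2 * real n) ^ m"])
    show "(\<lambda>\<omega>. T n \<omega> ^ m * mu_v n (Xv \<omega>)) \<in> borel_measurable M" by measurable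
    fix \<omega> assume \<omega>: "\<omega> \<in> space M"
    have x1: "\<bar>mu_v n (Xv \<omega>)\<bar> \<le> 1" by (rule mu_bd)
    have "\<bar>T n \<omega> ^ m\<bar> \<le> (2 * real n) ^ m" unfolding power_abs by (intro power_mono T_bd[OF \<omega>]) simp
    then have "\<bar>T n \<omega> ^ m\<bar> * \<bar>mu_v n (Xv \<omega>)\<bar> \<le> (2 * real n) ^ m * 1"
      using x1 by (intro mult_mono) auto
    then show "\<bar>T n \<omega> ^ m * mu_v n (Xv \<omega>)\<bar> \<le> (2 * real n) ^ m"
      by (simp add: abs_mult)
  qed
  have "integral\<^sup>L M (\<lambda>\<omega>. T n \<omega> ^ m * xi n \<omega>)
      = integral\<^sup>L M (\<lambda>\<omega>. T n \<omega> ^ m * real_of_int (X (Suc n) \<omega>)) - integral\<^sup>L M (\<lambda>\<omega>. T n \<omega> ^ m * mu_v n (Xv \<omega>))"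
    unfolding xi_def right_diff_distrib by (rule Bochner_Integration.integral_diff[OF i1 i2])
  also have "integral\<^sup>L M (\<lambda>\<omega>. T n \<omega> ^ m * real_of_int (X (Suc n) \<omega>))
      = integral\<^sup>L M (\<lambda>\<omega>. T n \<omega> ^ m * mu_v n (Xv \<omega>))"
    using key[OF n loc_pow[OF loc_Tv, of n m]] unfolding T_def by simp
  finally show ?thesis by simp
qed

end


context erwl begin

lemma intTX: "integrable M (\<lambda>\<omega>. T n \<omega> ^ a * xi n \<omega> ^ b)"
proof (rule intb[where B="(2 * real n) ^ a * 2 ^ b"])
  show "(\<lambda>\<omega>. T n \<omega> ^ a * xi n \<omega> ^ b) \<in> borel_measurable M" by measurable
  fix \<omega> assume \<omega>: "\<omega> \<in> space M"
  have "\<bar>T n \<omega>\<bar> ^ a * \<bar>xi n \<omega>\<bar> ^ b \<le> (2 * real n) ^ a * 2 ^ b"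
    using T_bd[OF \<omega>] xi_bd[OF \<omega>] by (intro mult_mono power_mono) auto
  then show "\<bar>T n \<omega> ^ a * xi n \<omega> ^ b\<bar> \<le> (2 * real n) ^ a * 2 ^ b"
    by (simp add: abs_mult power_abs)
qed

lemma intT: "integrable M (\<lambda>\<omega>. T n \<omega> ^ a)"
  using intTX[of n a 0] by simp

lemma intT1: "integrable M (\<lambda>\<omega>. T n \<omega> * xi n \<omega>)"
  using intTX[of n 1 1] by simp

lemma m2: "n \<ge> 1 \<Longrightarrow> integral\<^sup>L M (\<lambda>\<omega>. T n \<omega> ^ 2) \<le> 4 * real n"
proof (induction n rule: nat_induct_at_least)
  case base then show ?case by (simp add: T_1)
next
  case (Suc n)
  have "integral\<^sup>L M (\<lambda>\<omega>. T (Suc n) \<omega> ^ 2) \<le> integral\<^sup>L M (\<lambda>\<omega>. T n \<omega> ^ 2 + 2 * (T n \<omega> * xi n \<omega>) + 4)"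
  proof (rule integral_mono)
    show "integrable M (\<lambda>\<omega>. T (Suc n) \<omega> ^ 2)" by (rule intT)
    show "integrable M (\<lambda>\<omega>. T n \<omega> ^ 2 + 2 * (T n \<omega> * xi n \<omega>) + 4)"
      using intT[of n 2] intT1[of n] by auto
    fix \<omega> assume \<omega>: "\<omega> \<in> space M"
    have "xi n \<omega> ^ 2 \<le> 2 ^ 2" using xi_bd[OF \<omega>, of n]
      by (metis abs_ge_zero power2_abs power_mono)
    then show "T (Suc n) \<omega> ^ 2 \<le> T n \<omega> ^ 2 + 2 * (T n \<omega> * xi n \<omega>) + 4"
      unfolding T_Suc[OF Suc.hyps] by (simp add: power2_sum)
  qed
  also have "\<dots> = integral\<^sup>L M (\<lambda>\<omega>. T n \<omega> ^ 2) + 2 * integral\<^sup>L M (\<lambda>\<omega>. T n \<omega> * xi n \<omega>) + 4"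
    using intT[of n 2] intT1[of n] prob_space by simp
  also have "integral\<^sup>L M (\<lambda>\<omega>. T n \<omega> * xi n \<omega>) = 0" using orth[OF Suc.hyps, of 1] by simp
  finally show ?case using Suc.IH by simp
qed

lemma m4: "n \<ge> 1 \<Longrightarrow> integral\<^sup>L M (\<lambda>\<omega>. T n \<omega> ^ 4) \<le> 200 * real n ^ 2"
proof (induction n rule: nat_induct_at_least)
  case base then show ?case by (simp add: T_1)
next
  case (Suc n)
  have "integral\<^sup>L M (\<lambda>\<omega>. T (Suc n) \<omega> ^ 4)
     \<le> integral\<^sup>L M (\<lambda>\<omega>. T n \<omega> ^ 4 + 4 * (T n \<omega> ^ 3 * xi n \<omega>) + 40 * T n \<omega> ^ 2 + 32)"
  proof (rule integral_mono)
    show "integrable M (\<lambda>\<omega>. T (Suc n) \<omega> ^ 4)" by (rule intT)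
    show "integrable M (\<lambda>\<omega>. T n \<omega> ^ 4 + 4 * (T n \<omega> ^ 3 * xi n \<omega>) + 40 * T n \<omega> ^ 2 + 32)"
      using intT[of n 4] intT[of n 2] intTX[of n 3 1] by auto
    fix \<omega> assume \<omega>: "\<omega> \<in> space M"
    show "T (Suc n) \<omega> ^ 4 \<le> T n \<omega> ^ 4 + 4 * (T n \<omega> ^ 3 * xi n \<omega>) + 40 * T n \<omega> ^ 2 + 32"
      unfolding T_Suc[OF Suc.hyps] using quart_bound[OF xi_bd[OF \<omega>, of n], of "T n \<omega>"] by simp
  qed
  also have "\<dots> = integral\<^sup>L M (\<lambda>\<omega>. T n \<omega> ^ 4) + 4 * integral\<^sup>L M (\<lambda>\<omega>. T n \<omega> ^ 3 * xi n \<omega>)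
       + 40 * integral\<^sup>L M (\<lambda>\<omega>. T n \<omega> ^ 2) + 32"
    using intT[of n 4] intT[of n 2] intTX[of n 3 1] prob_space by simp
  also have "integral\<^sup>L M (\<lambda>\<omega>. T n \<omega> ^ 3 * xi n \<omega>) = 0" using orth[OF Suc.hyps, of 3] by simp
  finally have "integral\<^sup>L M (\<lambda>\<omega>. T (Suc n) \<omega> ^ 4) \<le> 200 * real n ^ 2 + 40 * (4 * real n) + 32"
    using Suc.IH m2[OF Suc.hyps] by linarith
  also have "\<dots> \<le> 200 * real (Suc n) ^ 2" using Suc.hyps by (simp add: power2_eq_square algebra_simps)
  finally show ?case .
qed

end


context erwl begin

lemma T_small:
  fixes e :: real assumes e: "e > 0"
  shows "AE \<omega> in M. eventually (\<lambda>n. T n \<omega> ^ 4 < (e * real n) ^ 4) sequentially"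
proof -
  define A where "A n = {\<omega>\<in>space M. (e * real n) ^ 4 \<le> T n \<omega> ^ 4}" for n
  have A_sets[measurable]: "A n \<in> sets M" for n unfolding A_def by measurable
  have bnd: "measure M (A n) \<le> 200 / e ^ 4 * inverse (real n ^ 2)" if n: "n \<ge> 1" for n
  proof -
    have c: "(e * real n) ^ 4 > 0" using e n by simp
    have "measure M (A n) \<le> integral\<^sup>L M (\<lambda>\<omega>. T n \<omega> ^ 4) / (e * real n) ^ 4"
      unfolding A_def by (rule integral_Markov_inequality_measure[OF intT sets.top _ c]) simp
    also have "\<dots> \<le> 200 * real n ^ 2 / (e * real n) ^ 4"
      using m4[OF n] c by (intro divide_right_mono) auto
    also have "\<dots> = 200 / e ^ 4 * inverse (real n ^ 2)"
      using n e by (simp add: field_simps power_mult_distrib)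
    finally show ?thesis .
  qed
  have summ: "summable (\<lambda>n. measure M (A n))"
  proof (rule summable_comparison_test')
    show "summable (\<lambda>n. 200 / e ^ 4 * inverse (real n ^ 2))"
      by (intro summable_mult inverse_power_summable) simp
    fix n :: nat assume "n \<ge> 1"
    then show "norm (measure M (A n)) \<le> 200 / e ^ 4 * inverse (real n ^ 2)" using bnd by simp
  qed
  have "AE \<omega> in M. eventually (\<lambda>n. \<omega> \<in> space M - A n) sequentially"
    by (rule borel_cantelli_AE1[OF A_sets _ summ]) (simp add: emeasure_eq_measure)
  then show ?thesis
    by (rule AE_mp) (auto intro!: AE_I2 elim!: eventually_mono simp: A_def not_le)
qed

lemma T_lim: "AE \<omega> in M. (\<lambda>n. T n \<omega> / real n) \<longlonglongrightarrow> 0"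
proof -
  have "AE \<omega> in M. \<forall>m::nat. eventually (\<lambda>n. T n \<omega> ^ 4 < (1 / real (Suc m) * real n) ^ 4) sequentially"
    unfolding AE_all_countable by (intro allI T_small) simp
  then show ?thesis
  proof (rule AE_mp, intro AE_I2 impI)
    fix \<omega> assume H: "\<forall>m::nat. eventually (\<lambda>n. T n \<omega> ^ 4 < (1 / real (Suc m) * real n) ^ 4) sequentially"
    show "(\<lambda>n. T n \<omega> / real n) \<longlonglongrightarrow> 0"
      unfolding LIMSEQ_iff
    proof (intro allI impI)
      fix r :: real assume r: "r > 0"
      obtain m :: nat where m: "1 / real (Suc m) < r"
        using reals_Archimedean r by (metis inverse_eq_divide)
      obtain N where N: "\<forall>n\<ge>N. T n \<omega> ^ 4 < (1 / real (Suc m) * real n) ^ 4"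
        using H[rule_format, of m] unfolding eventually_sequentially by blast
      have "norm (T n \<omega> / real n - 0) < r" if n: "n \<ge> max N 1" for n
      proof -
        have "\<bar>T n \<omega>\<bar> ^ 4 < (1 / real (Suc m) * real n) ^ 4" using N n by (simp add: power_abs)
        then have "\<bar>T n \<omega>\<bar> < 1 / real (Suc m) * real n"
          by (rule power_less_imp_less_base) simp
        also have "\<dots> < r * real n" using m n by (intro mult_strict_right_mono) auto
        finally show ?thesis using n by (simp add: abs_divide divide_less_eq)
      qed
      then show "\<exists>no. \<forall>n\<ge>no. norm (T n \<omega> / real n - 0) < r" by blast
    qed
  qed
qed

end


lemma sum_first_shift:
  fixes g :: "nat \<Rightarrow> real"
  assumes "n \<ge> 1"
  shows "(\<Sum>j\<in>{1..n}. g j) = g 1 + (\<Sum>j\<in>{1..<n}. g (Suc j))"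
  using assms
proof (induction n rule: nat_induct_at_least)
  case base then show ?case by simp
next
  case (Suc n)
  then show ?case by (simp add: atLeastLessThanSuc)
qed

context erwl begin

definition phi :: "real \<Rightarrow> real" where "phi s = 2 * G ((1 + s) / 2) - 1"

lemma S_card:
  assumes \<omega>: "\<omega> \<in> space M"
  shows "real_of_int (erw_S X n \<omega>) = 2 * real (card {i\<in>{1..n}. X i \<omega> = 1}) - real n"
proof -
  have c: "real (card {i\<in>{1..n}. X i \<omega> = 1}) = (\<Sum>i\<in>{1..n}. if X i \<omega> = 1 then 1 else 0)"
    by (subst sum.inter_filter[symmetric]) auto
  have "real_of_int (erw_S X n \<omega>) = (\<Sum>i\<in>{1..n}. real_of_int (X i \<omega>))"
    unfolding erw_S_def by simp
  also have "\<dots> = (\<Sum>i\<in>{1..n}. 2 * (if X i \<omega> = 1 then 1 else 0) - 1)"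
  proof (rule sum.cong[OF refl])
    fix i assume "i \<in> {1..n}"
    then have "X i \<omega> \<in> {-1, 1}" using Xpm[OF _ \<omega>] by auto
    then show "real_of_int (X i \<omega>) = 2 * (if X i \<omega> = 1 then 1 else 0) - 1" by auto
  qed
  also have "\<dots> = 2 * real (card {i\<in>{1..n}. X i \<omega> = 1}) - real n"
    unfolding c by (simp add: sum_subtractf sum_distrib_left)
  finally show ?thesis .
qed

lemma S_bd:
  assumes \<omega>: "\<omega> \<in> space M"
  shows "\<bar>real_of_int (erw_S X n \<omega>)\<bar> \<le> real n"
proof -
  have "\<bar>real_of_int (erw_S X n \<omega>)\<bar> \<le> (\<Sum>i\<in>{1..n}. \<bar>real_of_int (X i \<omega>)\<bar>)"
    unfolding erw_S_def by (simp add: sum_abs del: of_int_sum add: of_int_sum[symmetric])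
      (metis of_int_abs of_int_le_iff of_int_sum sum_abs)
  also have "\<dots> \<le> (\<Sum>i\<in>{1..n}. 1)"
  proof (rule sum_mono)
    fix i assume "i \<in> {1..n}"
    then have "X i \<omega> \<in> {-1, 1}" using Xpm[OF _ \<omega>] by auto
    then show "\<bar>real_of_int (X i \<omega>)\<bar> \<le> 1" by auto
  qed
  finally show ?thesis by simp
qed

lemma main:
  assumes Lt: "real k * \<bar>2 * p - 1\<bar> < 1"
  shows "\<exists>x\<in>{-1<..<1}. AE \<omega> in M. (\<lambda>n. real_of_int (erw_S X n \<omega>) / real n) \<longlonglongrightarrow> x"
proof -
  define L where "L = real k * \<bar>2 * p - 1\<bar>"
  have L: "0 \<le> L" "L < 1" using Lt unfolding L_def by auto
  have phi_rng: "phi s \<in> {2 * lo - 1 .. 2 * hi - 1}" if "s \<in> {-1..1}" for s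
  proof -
    have "(1 + s) / 2 \<in> {0..1}" using that by auto
    from G_range[OF this] show ?thesis unfolding phi_def by auto
  qed
  have cont: "continuous_on {-1..1} (\<lambda>s. phi s - s)"
  proof -
    have "continuous_on {-1..1::real} (\<lambda>s. G ((1 + s) / 2))"
      by (rule continuous_on_compose2[OF G_cont]) (auto intro!: continuous_intros)
    then show ?thesis unfolding phi_def by (auto intro!: continuous_intros)
  qed
  obtain xs where xs: "-1 \<le> xs" "xs \<le> 1" "phi xs - xs = 0"
  proof -
    have "phi 1 - 1 \<le> 0" "0 \<le> phi (-1) - (-1)" using phi_rng[of 1] phi_rng[of "-1"] lohi by auto
    from IVT2'[OF this _ cont] show ?thesis using that by auto
  qed
  have fix_: "phi xs = xs" using xs by simp
  have xs_in: "xs \<in> {-1<..<1}" using phi_rng[of xs] xs lohi fix_ by auto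
  have lip: "\<bar>phi s - xs\<bar> \<le> L * \<bar>s - xs\<bar>" if "s \<in> {-1..1}" for s
  proof -
    have a: "(1 + s) / 2 \<in> {0..1}" "(1 + xs) / 2 \<in> {0..1}" using that xs by auto
    have "\<bar>phi s - xs\<bar> = 2 * \<bar>G ((1 + s) / 2) - G ((1 + xs) / 2)\<bar>"
    proof -
      have "phi s - xs = 2 * (G ((1 + s) / 2) - G ((1 + xs) / 2))"
        by (subst (1) fix_[symmetric]) (simp add: phi_def algebra_simps)
      then have "\<bar>phi s - xs\<bar> = \<bar>2 * (G ((1 + s) / 2) - G ((1 + xs) / 2))\<bar>" by (rule arg_cong)
      also have "\<dots> = 2 * \<bar>G ((1 + s) / 2) - G ((1 + xs) / 2)\<bar>" unfolding abs_mult by simp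
      finally show ?thesis .
    qed
    also have "\<dots> \<le> 2 * (real k * \<bar>2 * p - 1\<bar> * \<bar>(1 + s) / 2 - (1 + xs) / 2\<bar>)"
      using G_lip[OF a] by simp
    also have "\<bar>(1 + s) / 2 - (1 + xs) / 2\<bar> = \<bar>s - xs\<bar> / 2"
    proof -
      have "(1 + s) / 2 - (1 + xs) / 2 = (s - xs) / 2" by (simp add: diff_divide_distrib add_divide_distrib)
      then show ?thesis by (simp only: abs_divide)
    qed
    also have "2 * (real k * \<bar>2 * p - 1\<bar> * (\<bar>s - xs\<bar> / 2)) = L * \<bar>s - xs\<bar>"
      unfolding L_def by simp
    finally show ?thesis .
  qed
  have "AE \<omega> in M. (\<lambda>n. real_of_int (erw_S X n \<omega>) / real n) \<longlonglongrightarrow> xs"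
    using T_lim
  proof (rule AE_mp, intro AE_I2 impI)
    fix \<omega> assume \<omega>: "\<omega> \<in> space M" and Tl: "(\<lambda>n. T n \<omega> / real n) \<longlonglongrightarrow> 0"
    define a where "a n = real_of_int (erw_S X n \<omega>) / real n" for n
    define mu where "mu n = mu_v n (Xv \<omega>)" for n
    have a_rng: "a n \<in> {-1..1}" for n
    proof (cases "n = 0")
      case True then show ?thesis unfolding a_def by simp
    next
      case False
      then show ?thesis using S_bd[OF \<omega>, of n] unfolding a_def
        by (auto simp: abs_le_iff divide_le_eq le_divide_eq)
    qed
    have mu_phi: "mu n = phi (a n)" if n: "n \<ge> 1" for n
    proof -
      have eq: "real (card {i\<in>{1..n}. X i \<omega> = 1}) / real n = (1 + a n) / 2"
        unfolding a_def S_card[OF \<omega>] using n by (simp add: field_simps)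
      show ?thesis unfolding mu_def mu_v_def phi_def Xv_def by (simp only: eq)
    qed
    show "(\<lambda>n. real_of_int (erw_S X n \<omega>) / real n) \<longlonglongrightarrow> xs"
      unfolding a_def[symmetric]
    proof (rule det_conv[OF L _ _ _ _ Tl])
      show "\<forall>n\<ge>1. \<bar>mu n - xs\<bar> \<le> L * \<bar>a n - xs\<bar>" using mu_phi lip a_rng by auto
      show "\<bar>real_of_int (X 1 \<omega>) - xs\<bar> \<le> 2"
      proof -
        have "X 1 \<omega> \<in> {-1, 1}" using Xpm[OF _ \<omega>] by auto
        then show ?thesis using xs by auto
      qed
      show "\<forall>n. \<bar>a n - xs\<bar> \<le> 2" using a_rng xs by (auto simp: abs_le_iff) (smt (verit) atLeastAtMost_iff)+
      show "\<forall>n\<ge>1. real n * (a n - xs) = (real_of_int (X 1 \<omega>) - xs) + (\<Sum>j\<in>{1..<n}. (mu j - xs)) + T n \<omega>"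
      proof (intro allI impI)
        fix n :: nat assume n: "n \<ge> 1"
        have "real n * a n = real_of_int (erw_S X n \<omega>)" unfolding a_def using n by simp
        also have "\<dots> = (\<Sum>j\<in>{1..n}. real_of_int (X j \<omega>))" unfolding erw_S_def by simp
        also have "\<dots> = real_of_int (X 1 \<omega>) + (\<Sum>j\<in>{1..<n}. real_of_int (X (Suc j) \<omega>))"
          by (rule sum_first_shift[OF n])
        also have "(\<Sum>j\<in>{1..<n}. real_of_int (X (Suc j) \<omega>)) = (\<Sum>j\<in>{1..<n}. mu j) + T n \<omega>"
          unfolding T_def Tv_def mu_def Xv_def by (simp add: sum_subtractf)
        finally have "real n * a n = real_of_int (X 1 \<omega>) + (\<Sum>j\<in>{1..<n}. mu j) + T n \<omega>" by simp
        moreover have "(\<Sum>j\<in>{1..<n}. (mu j - xs)) = (\<Sum>j\<in>{1..<n}. mu j) - (real n - 1) * xs"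
          using n by (simp add: sum_subtractf of_nat_diff)
        ultimately show "real n * (a n - xs) = (real_of_int (X 1 \<omega>) - xs) + (\<Sum>j\<in>{1..<n}. (mu j - xs)) + T n \<omega>"
          by (simp add: algebra_simps)
      qed
    qed
  qed
  then show ?thesis using xs_in by blast
qed

end

theorem proposition4p4:
  fixes M :: "'a measure" and q p :: real and k :: nat and f :: "real \<Rightarrow> real"
    and X :: "nat \<Rightarrow> 'a \<Rightarrow> int" and U :: "nat \<Rightarrow> nat \<Rightarrow> 'a \<Rightarrow> nat"
  assumes "0 \<le> q" "q \<le> 1"
    and "0 < p" "p < 1" "p \<noteq> 1/2"
    and "k \<ge> 1"
    and "\<forall>x\<in>{0..1}. f x \<in> {0..1}"
    and "is_erw_k M q p k f X U"
    and "(1/2 < p \<and> p < 1/2 + 1/(2 * real k) \<and> f 1 < p / (2*p - 1))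
       \<or> (1/2 - 1/(2 * real k) < p \<and> p < 1/2 \<and> f 0 < (1 - p) / (1 - 2*p))"
  shows "\<exists>x\<in>{-1<..<1}. AE \<omega> in M.
           (\<lambda>n. real_of_int (erw_S X n \<omega>) / real n) \<longlonglongrightarrow> x"
proof -
  interpret erwl M q p k f X U
    using assms(3,4,6,7,8) by unfold_locales auto
  have kpos: "real k > 0" using assms(6) by simp
  have "real k * \<bar>2 * p - 1\<bar> < 1"
    using assms(9)
  proof
    assume h: "1/2 < p \<and> p < 1/2 + 1/(2 * real k) \<and> f 1 < p / (2*p - 1)"
    then have "2 * real k * p < real k + 1" using kpos by (simp add: field_simps)
    moreover have "\<bar>2 * p - 1\<bar> = 2 * p - 1" using h by simp
    ultimately show ?thesis by (simp add: algebra_simps)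
  next
    assume h: "1/2 - 1/(2 * real k) < p \<and> p < 1/2 \<and> f 0 < (1 - p) / (1 - 2*p)"
    then have "real k - 1 < 2 * real k * p" using kpos by (simp add: field_simps)
    moreover have "\<bar>2 * p - 1\<bar> = 1 - 2 * p" using h by simp
    ultimately show ?thesis by (simp add: algebra_simps)
  qed
  then show ?thesis by (rule main)
qed

end
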